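(* Let $\theta\ge\sigma>0$, $n\geq 1$, $M\ge1$, $\Upsilon>0$. Then $$\epsilon_{\mathrm{a}}^{\star}(n,M,\Upsilon)\;\geq\;\underline{f}\bigl(\tfrac1M,\Upsilon\bigr),$$ where $\underline{f}$ is the lower convex envelope of $f(\beta,\gamma)=\alpha_\beta(\varphi^n_{\sqrt\gamma,\sigma},\varphi^n_{0,\theta})$ on the domain $\beta\in[0,1]$, $\gamma\ge0$.
   Context: $\varphi_{\mu,\sigma}(y)=\frac{1}{\sqrt{2\pi}\sigma}e^{-(y-\mu)^2/(2\sigma^2)}$; $\varphi^n_{\mu,\sigma}$ is the distribution on $\mathbb{R}^n$ of $n$ i.i.d. $\mathcal{N}(\mu,\sigma^2)$ coordinates. $\alpha_\beta(A,B)=\inf\{1-\mathbb{E}_A[T]:\ T\to[0,1],\ \mathbb{E}_B[T]\le\beta\}$. The lower convex envelope $\underline f=f^{**}$ is the biconjugate (double Legendre–Fenchel transform) of $f$, i.e. the largest lower semicontinuous convex function on the domain majorized by $f$. AWGN channel with noise variance $\sigma^2$: input $\mathbf{x}\in\mathbb{R}^n$, output density $\prod_i\varphi_{x_i,\sigma}(y_i)$; for a codebook $\mathcal{C}=\{\mathbf{c}_1,\dots,\mathbf{c}_M\}\subset\mathbb{R}^n$ with uniform message and maximum-likelihood decoding, $P_e(\mathcal{C})$ is the average error probability; $\epsilon_{\mathrm{a}}^{\star}(n,M,\Upsilon)=\inf\{P_e(\mathcal{C}):\frac1M\sum_{i=1}^M\|\mathbf{c}_i\|^2\le n\Upsilon\}$.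 *)

theory Defs
  imports "HOL-Probability.Probability"
begin

(* Points of R^n are represented as functions nat => real; only the coordinates 0..n-1 matter.
   The ambient measurable space is the product space PiM {..<n} (\<lambda>_. lborel). *)

definition gauss_pdf :: "nat \<Rightarrow> (nat \<Rightarrow> real) \<Rightarrow> real \<Rightarrow> (nat \<Rightarrow> real) \<Rightarrow> real" where
  "gauss_pdf n x s y = (\<Prod>k<n. normal_density (x k) s (y k))"

definition gauss_vec :: "nat \<Rightarrow> (nat \<Rightarrow> real) \<Rightarrow> real \<Rightarrow> (nat \<Rightarrow> real) measure" where
  "gauss_vec n x s = density (PiM {..<n} (\<lambda>_. lborel)) (\<lambda>y. ennreal (gauss_pdf n x s y))"

definition gauss_iid :: "nat \<Rightarrow> real \<Rightarrow> real \<Rightarrow> (nat \<Rightarrow> real) measure" where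
  "gauss_iid n mu s = gauss_vec n (\<lambda>_. mu) s"

definition alpha_beta :: "real \<Rightarrow> 'a measure \<Rightarrow> 'a measure \<Rightarrow> real" where
  "alpha_beta \<beta> A B = Inf {1 - (\<integral>y. T y \<partial>A) | T.
       T \<in> borel_measurable A \<and> (\<forall>y \<in> space A. 0 \<le> T y \<and> T y \<le> 1) \<and> (\<integral>y. T y \<partial>B) \<le> \<beta>}"

(* Legendre-Fenchel conjugate of f restricted to domain D \<subseteq> R^2 (f = +\<infinity> outside D) *)
definition conj2 :: "(real \<times> real \<Rightarrow> real) \<Rightarrow> (real \<times> real) set \<Rightarrow> real \<times> real \<Rightarrow> ereal" where
  "conj2 f D a = (SUP y\<in>D. ereal (fst a * fst y + snd a * snd y) - ereal (f y))"

definition lower_convex_env :: "(real \<times> real \<Rightarrow> real) \<Rightarrow> (real \<times> real) set \<Rightarrow> real \<times> real \<Rightarrow> ereal" where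
  "lower_convex_env f D x = (SUP a\<in>UNIV. ereal (fst a * fst x + snd a * snd x) - conj2 f D a)"

definition ml_decoder :: "nat \<Rightarrow> real \<Rightarrow> nat \<Rightarrow> (nat \<Rightarrow> nat \<Rightarrow> real) \<Rightarrow> (nat \<Rightarrow> real) \<Rightarrow> nat" where
  "ml_decoder n s M c y = (LEAST i. i < M \<and> (\<forall>j<M. gauss_pdf n (c j) s y \<le> gauss_pdf n (c i) s y))"

definition awgn_Pe :: "nat \<Rightarrow> real \<Rightarrow> nat \<Rightarrow> (nat \<Rightarrow> nat \<Rightarrow> real) \<Rightarrow> real" where
  "awgn_Pe n s M c = (1 / real M) * (\<Sum>i<M. measure (gauss_vec n (c i) s)
        {y \<in> space (gauss_vec n (c i) s). ml_decoder n s M c y \<noteq> i})"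

definition eps_a_star :: "real \<Rightarrow> nat \<Rightarrow> nat \<Rightarrow> real \<Rightarrow> real" where
  "eps_a_star s n M \<Upsilon> = Inf {awgn_Pe n s M c | c.
      (1 / real M) * (\<Sum>i<M. \<Sum>k<n. (c i k)\<^sup>2) \<le> real n * \<Upsilon>}"

end

theory Submission imports Defs begin

abbreviation LP :: "nat set \<Rightarrow> (nat \<Rightarrow> real) measure" where
  "LP I \<equiv> PiM I (\<lambda>_. lborel)"

abbreviation LL :: "nat \<Rightarrow> (nat \<Rightarrow> real) measure" where
  "LL n \<equiv> PiM {..<n} (\<lambda>_. lborel)"

interpretation PS: product_sigma_finite "\<lambda>_::nat. lborel :: real measure"
  by standard

lemma gauss_pdf_meas[measurable]: "gauss_pdf n x s \<in> borel_measurable (LL n)"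
  unfolding gauss_pdf_def[abs_def] by measurable

lemma gauss_pdf_nonneg: "0 \<le> gauss_pdf n x s y"
  unfolding gauss_pdf_def by (auto intro: prod_nonneg)

lemma nn_normal: "s > 0 \<Longrightarrow> (\<integral>\<^sup>+ y. ennreal (normal_density m s y) \<partial>lborel) = 1"
proof -
  assume s: "s > 0"
  have "(\<integral>\<^sup>+ y. ennreal (normal_density m s y) \<partial>lborel) = ennreal (\<integral> y. normal_density m s y \<partial>lborel)"
    using integrable_normal_density[OF s] by (intro nn_integral_eq_integral) (auto simp: normal_density_nonneg)
  also have "\<dots> = 1" using integral_normal_density[OF s] by simp
  finally show ?thesis by simp
qed

lemma prob_space_gauss_vec: assumes "s > 0" shows "prob_space (gauss_vec n x s)"
proof
  have "emeasure (gauss_vec n x s) (space (gauss_vec n x s)) =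
     (\<integral>\<^sup>+ y. ennreal (gauss_pdf n x s y) \<partial>LL n)"
    unfolding gauss_vec_def by (simp add: emeasure_density del: space_PiM)
  also have "\<dots> = (\<integral>\<^sup>+ y. (\<Prod>k\<in>{..<n}. ennreal (normal_density (x k) s (y k))) \<partial>LL n)"
    unfolding gauss_pdf_def by (simp add: prod_ennreal normal_density_nonneg)
  also have "\<dots> = (\<Prod>k\<in>{..<n}. (\<integral>\<^sup>+ y. ennreal (normal_density (x k) s y) \<partial>lborel))"
    by (rule PS.product_nn_integral_prod) auto
  also have "\<dots> = 1" using assms by (simp add: nn_normal)
  finally show "emeasure (gauss_vec n x s) (space (gauss_vec n x s)) = 1" .
qed

definition aff :: "nat \<Rightarrow> nat \<Rightarrow> real \<Rightarrow> real \<Rightarrow> (nat \<Rightarrow> real) \<Rightarrow> (nat \<Rightarrow> real)" where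
  "aff j k u t y = y(j := u * y j + t * y k)"

lemma aff_meas[measurable]:
  assumes "j < n" "k < n"
  shows "aff j k u t \<in> LL n \<rightarrow>\<^sub>M LL n"
proof -
  have eq: "aff j k u t = (\<lambda>y i. if i = j then u * y j + t * y k else y i)"
    by (auto simp: aff_def fun_eq_iff)
  show ?thesis unfolding eq
  proof (rule measurable_PiM_single')
    fix i assume i: "i \<in> {..<n}"
    show "(\<lambda>y. if i = j then u * y j + t * y k else y i) \<in> LL n \<rightarrow>\<^sub>M lborel"
      using assms i by (cases "i = j") (simp_all, measurable)
  next
    show "(\<lambda>y i. if i = j then u * y j + t * y k else y i) \<in> space (LL n) \<rightarrow> (\<Pi>\<^sub>E i\<in>{..<n}. space lborel)"
      using assms by (auto simp: space_PiM PiE_iff extensional_def)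
  qed
qed

lemma aff_inv:
  assumes jk: "j < n" "k < n" "j \<noteq> k \<or> t = 0" and u: "u = 1 \<or> u = -1"
    and g[measurable]: "g \<in> borel_measurable (LL n)"
  shows "(\<integral>\<^sup>+ y. g (aff j k u t y) \<partial>LL n) = (\<integral>\<^sup>+ y. g y \<partial>LL n)"
proof -
  define I where "I = {..<n} - {j}"
  have II: "{..<n} = insert j I" "finite I" "j \<notin> I" using jk by (auto simp: I_def)
  have gm: "g \<in> borel_measurable (LP (insert j I))" using g II by simp
  have gam: "(\<lambda>y. g (aff j k u t y)) \<in> borel_measurable (LP (insert j I))"
    using measurable_comp[OF aff_meas[OF jk(1,2)] g, of u t] II by (simp add: comp_def)
  have "(\<integral>\<^sup>+ y. g (aff j k u t y) \<partial>LL n) =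
     (\<integral>\<^sup>+ x. (\<integral>\<^sup>+ a. g (aff j k u t (x(j := a))) \<partial>lborel) \<partial>LP I)"
    unfolding II(1) by (rule PS.product_nn_integral_insert[OF II(2,3) gam])
  also have "\<dots> = (\<integral>\<^sup>+ x. (\<integral>\<^sup>+ a. g (x(j := a)) \<partial>lborel) \<partial>LP I)"
  proof (rule nn_integral_cong)
    fix x assume x: "x \<in> space (LP I)"
    have fm: "(\<lambda>a. g (x(j := a))) \<in> borel_measurable borel"
      using measurable_comp[OF measurable_component_update[OF x II(3)] gm] by (simp add: comp_def)
    have uu: "u \<noteq> 0" "\<bar>u\<bar> = 1" using u by auto
    have "(\<integral>\<^sup>+ a. g (x(j := a)) \<partial>lborel) = ennreal \<bar>u\<bar> * (\<integral>\<^sup>+ a. g (x(j := t * x k + u * a)) \<partial>lborel)"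
      by (rule nn_integral_real_affine[OF fm uu(1)])
    also have "\<dots> = (\<integral>\<^sup>+ a. g (aff j k u t (x(j := a))) \<partial>lborel)"
      using uu jk by (cases "k = j") (simp_all add: aff_def algebra_simps)
    finally show "(\<integral>\<^sup>+ a. g (aff j k u t (x(j := a))) \<partial>lborel) = (\<integral>\<^sup>+ a. g (x(j := a)) \<partial>lborel)" by simp
  qed
  also have "\<dots> = (\<integral>\<^sup>+ y. g y \<partial>LL n)"
    unfolding II(1) by (rule PS.product_nn_integral_insert[OF II(2,3) gm, symmetric])
  finally show ?thesis .
qed

definition minv :: "nat \<Rightarrow> ((nat \<Rightarrow> real) \<Rightarrow> (nat \<Rightarrow> real)) \<Rightarrow> bool" where
  "minv n F \<longleftrightarrow> F \<in> LL n \<rightarrow>\<^sub>M LL n \<and>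
     (\<forall>g \<in> borel_measurable (LL n). (\<integral>\<^sup>+ y. g (F y) \<partial>LL n) = (\<integral>\<^sup>+ y. g y \<partial>LL n))"

lemma minv_comp: assumes "minv n F" "minv n G" shows "minv n (F \<circ> G)"
proof -
  have F: "F \<in> LL n \<rightarrow>\<^sub>M LL n" and G: "G \<in> LL n \<rightarrow>\<^sub>M LL n" using assms by (auto simp: minv_def)
  have "(\<integral>\<^sup>+ y. g (F (G y)) \<partial>LL n) = (\<integral>\<^sup>+ y. g y \<partial>LL n)" if g: "g \<in> borel_measurable (LL n)" for g
  proof -
    have gf: "(\<lambda>y. g (F y)) \<in> borel_measurable (LL n)" using measurable_comp[OF F g] by (simp add: comp_def)
    have H: "\<And>h. h \<in> borel_measurable (LL n) \<Longrightarrow> (\<integral>\<^sup>+ y. h (G y) \<partial>LL n) = (\<integral>\<^sup>+ y. h y \<partial>LL n)"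
      using assms(2) unfolding minv_def by blast
    have "(\<integral>\<^sup>+ y. g (F (G y)) \<partial>LL n) = (\<integral>\<^sup>+ y. g (F y) \<partial>LL n)"
      by (rule H[OF gf])
    also have "\<dots> = (\<integral>\<^sup>+ y. g y \<partial>LL n)" using assms(1) g unfolding minv_def by blast
    finally show ?thesis .
  qed
  then show ?thesis using measurable_comp[OF G F] unfolding minv_def by simp
qed

lemma minv_aff: assumes "j < n" "k < n" "j \<noteq> k \<or> t = 0" "u = 1 \<or> u = -1"
  shows "minv n (aff j k u t)"
  unfolding minv_def using aff_meas[OF assms(1,2)] aff_inv[OF assms] by blast

definition rot :: "nat \<Rightarrow> nat \<Rightarrow> real \<Rightarrow> real \<Rightarrow> (nat \<Rightarrow> real) \<Rightarrow> (nat \<Rightarrow> real)" where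
  "rot j k p q y = y(j := p * y j - q * y k, k := q * y j + p * y k)"

lemma minv_rot: assumes jk: "j < n" "k < n" "j \<noteq> k" and pq: "p\<^sup>2 + q\<^sup>2 = 1"
  shows "minv n (rot j k p q)"
proof (cases "q = 0")
  case True
  then have "p = 1 \<or> p = -1" using pq by (simp add: power2_eq_1_iff)
  then show ?thesis
  proof
    assume "p = 1"
    then have "rot j k p q = aff j k 1 0" using True by (auto simp: rot_def aff_def fun_eq_iff)
    then show ?thesis using minv_aff[OF jk(1,2)] by simp
  next
    assume "p = -1"
    then have "rot j k p q = aff j k (-1) 0 \<circ> aff k j (-1) 0" using True jk
      by (auto simp: rot_def aff_def fun_eq_iff)
    then show ?thesis using minv_comp[OF minv_aff[OF jk(1,2)] minv_aff[OF jk(2,1)]] by simp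
  qed
next
  case False
  define s where "s = (p - 1) / q"
  have e1: "1 + s * q = p" using False by (simp add: s_def field_simps)
  have h: "q * (p*p+q*q) = q" using pq by (simp add: power2_eq_square)
  have e2: "s + s * (1 + q * s) = - q" using False
    by (simp add: s_def field_simps) (insert h, simp add: algebra_simps)
  have "rot j k p q = aff j k 1 s \<circ> aff k j 1 q \<circ> aff j k 1 s"
  proof
    fix y
    have cj: "y j + s * y k + s * (y k + q * (y j + s * y k)) = p * y j - q * y k"
    proof -
      have "y j + s * y k + s * (y k + q * (y j + s * y k)) = (1 + s * q) * y j + (s + s * (1 + q * s)) * y k"
        by (simp add: algebra_simps)
      then show ?thesis using e1 e2 by simp
    qed
    have ck: "y k + q * (y j + s * y k) = q * y j + p * y k"
    proof -
      have "y k + q * (y j + s * y k) = q * y j + (1 + s * q) * y k" by (simp add: algebra_simps)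
      then show ?thesis using e1 by simp
    qed
    show "rot j k p q y = (aff j k 1 s \<circ> aff k j 1 q \<circ> aff j k 1 s) y"
      using jk cj ck unfolding rot_def aff_def comp_def by (simp add: fun_eq_iff)
  qed
  then show ?thesis
    using minv_comp[OF minv_comp[OF minv_aff[OF jk(1,2)] minv_aff[OF jk(2,1)]] minv_aff[OF jk(1,2)]] jk
    by simp
qed

definition good :: "nat \<Rightarrow> ((nat \<Rightarrow> real) \<Rightarrow> (nat \<Rightarrow> real)) \<Rightarrow> bool" where
  "good n F \<longleftrightarrow> minv n F \<and> (\<forall>y v. (\<Sum>i<n. (F y i - F v i)\<^sup>2) = (\<Sum>i<n. (y i - v i)\<^sup>2)) \<and>
     (\<forall>y y'. (\<forall>i<n. y i = y' i) \<longrightarrow> (\<forall>i<n. F y i = F y' i)) \<and> (\<forall>i<n. F (\<lambda>_. 0) i = 0)"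

lemma good_comp: assumes "good n F" "good n G" shows "good n (F \<circ> G)"
proof -
  have c: "\<forall>y y'. (\<forall>i<n. y i = y' i) \<longrightarrow> (\<forall>i<n. F y i = F y' i)" using assms(1) by (simp add: good_def)
  have z: "\<forall>i<n. G (\<lambda>_. 0) i = (\<lambda>_. 0::real) i" using assms(2) by (simp add: good_def)
  show ?thesis using assms minv_comp c[rule_format, OF z[rule_format]] unfolding good_def
    by (auto simp: comp_def)
qed

lemma sum_jk: fixes n :: nat assumes "j < n" "k < n" "j \<noteq> k"
  shows "(\<Sum>i<n. f i) = f j + f k + (\<Sum>i\<in>{..<n}-{j,k}. f i)"
proof -
  have "(\<Sum>i<n. f i) = f j + (\<Sum>i\<in>{..<n}-{j}. f i)" using assms by (intro sum.remove) auto
  also have "(\<Sum>i\<in>{..<n}-{j}. f i) = f k + (\<Sum>i\<in>{..<n}-{j}-{k}. f i)" using assms by (intro sum.remove) auto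
  also have "{..<n}-{j}-{k} = {..<n}-{j,k}" by auto
  finally show ?thesis by (simp add: add.assoc)
qed

lemma rot_dist: assumes jk: "j < n" "k < n" "j \<noteq> k" and pq: "p\<^sup>2 + q\<^sup>2 = 1"
  shows "(\<Sum>i<n. (rot j k p q y i - rot j k p q v i)\<^sup>2) = (\<Sum>i<n. (y i - v i)\<^sup>2)"
proof -
  define a where "a = y j - v j"
  define b where "b = y k - v k"
  have dj: "rot j k p q y j - rot j k p q v j = p * a - q * b" using jk by (simp add: rot_def a_def b_def algebra_simps)
  have dk: "rot j k p q y k - rot j k p q v k = q * a + p * b" using jk by (simp add: rot_def a_def b_def algebra_simps)
  have e: "(p * a - q * b)\<^sup>2 + (q * a + p * b)\<^sup>2 = (p\<^sup>2 + q\<^sup>2) * (a\<^sup>2 + b\<^sup>2)"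
    by (simp add: power2_eq_square algebra_simps)
  have r: "(\<Sum>i\<in>{..<n}-{j,k}. (rot j k p q y i - rot j k p q v i)\<^sup>2) = (\<Sum>i\<in>{..<n}-{j,k}. (y i - v i)\<^sup>2)"
    by (rule sum.cong) (auto simp: rot_def)
  show ?thesis
    unfolding sum_jk[OF jk, of "\<lambda>i. (rot j k p q y i - rot j k p q v i)\<^sup>2"] sum_jk[OF jk, of "\<lambda>i. (y i - v i)\<^sup>2"]
    using dj dk e r pq by (simp add: a_def b_def)
qed

lemma good_rot: assumes jk: "j < n" "k < n" "j \<noteq> k" and pq: "p\<^sup>2 + q\<^sup>2 = 1"
  shows "good n (rot j k p q)"
  unfolding good_def using minv_rot[OF assms] rot_dist[OF assms] jk
  by (auto simp: rot_def)

lemma good_flip: assumes j: "j < n" and u: "u = 1 \<or> u = -1"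
  shows "good n (aff j j u 0)"
proof -
  have "(\<Sum>i<n. (aff j j u 0 y i - aff j j u 0 v i)\<^sup>2) = (\<Sum>i<n. (y i - v i)\<^sup>2)" for y v
  proof (rule sum.cong)
    fix i show "(aff j j u 0 y i - aff j j u 0 v i)\<^sup>2 = (y i - v i)\<^sup>2"
      using u by (cases "i = j") (auto simp: aff_def power2_eq_square algebra_simps)
  qed simp
  then show ?thesis unfolding good_def using minv_aff[OF j j _ u] by (auto simp: aff_def)
qed

definition RR :: "nat \<Rightarrow> (nat \<Rightarrow> real) \<Rightarrow> (nat \<Rightarrow> real) \<Rightarrow> bool" where
  "RR n v w \<longleftrightarrow> (\<exists>F. good n F \<and> (\<forall>i<n. F v i = w i))"

lemma RR_trans: assumes "RR n u v" "RR n v w" shows "RR n u w"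
proof -
  obtain F where F: "good n F" "\<forall>i<n. F u i = v i" using assms(1) by (auto simp: RR_def)
  obtain G where G: "good n G" "\<forall>i<n. G v i = w i" using assms(2) by (auto simp: RR_def)
  have c: "\<forall>y y'. (\<forall>i<n. y i = y' i) \<longrightarrow> (\<forall>i<n. G y i = G y' i)" using G(1) by (simp add: good_def)
  have "\<forall>i<n. (G \<circ> F) u i = w i" using c[rule_format, OF F(2)[rule_format]] G(2) by auto
  then show ?thesis using good_comp[OF G(1) F(1)] by (auto simp: RR_def)
qed

lemma RR_congL: assumes "RR n v w" "\<forall>i<n. v i = v' i" shows "RR n v' w"
proof -
  obtain F where F: "good n F" "\<forall>i<n. F v i = w i" using assms(1) by (auto simp: RR_def)
  have c: "\<forall>y y'. (\<forall>i<n. y i = y' i) \<longrightarrow> (\<forall>i<n. F y i = F y' i)" using F(1) by (simp add: good_def)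
  show ?thesis using c[rule_format, OF assms(2)[rule_format]] F unfolding RR_def by auto
qed

lemma RR_congR: assumes "RR n v w" "\<forall>i<n. w i = w' i" shows "RR n v w'"
  using assms unfolding RR_def by auto

lemma RR_flip: assumes j: "j < n" and sq: "(v j)\<^sup>2 = (w j)\<^sup>2" and oth: "\<forall>i<n. i \<noteq> j \<longrightarrow> v i = w i"
  shows "RR n v w"
proof -
  have "w j = v j \<or> w j = - v j" using sq by (metis power2_eq_iff)
  then obtain u where u: "u = 1 \<or> u = -1" "w j = u * v j" by force
  have "\<forall>i<n. aff j j u 0 v i = w i" using u oth by (auto simp: aff_def)
  then show ?thesis using good_flip[OF j u(1)] unfolding RR_def by blast
qed

lemma RR_rot: assumes jk: "j < n" "k < n" "j \<noteq> k"
  and sq: "(v j)\<^sup>2 + (v k)\<^sup>2 = (w j)\<^sup>2 + (w k)\<^sup>2" and oth: "\<forall>i<n. i \<noteq> j \<longrightarrow> i \<noteq> k \<longrightarrow> v i = w i"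
  shows "RR n v w"
proof -
  define a where "a = v j"
  define b where "b = v k"
  define a' where "a' = w j"
  define b' where "b' = w k"
  define r where "r = a\<^sup>2 + b\<^sup>2"
  have sq': "a'\<^sup>2 + b'\<^sup>2 = r" using sq by (simp add: a_def b_def a'_def b'_def r_def)
  show ?thesis
  proof (cases "r = 0")
    case True
    then have "a = 0" "b = 0" unfolding r_def by (auto simp: sum_power2_eq_zero_iff)
    moreover have "a' = 0" "b' = 0" using True sq' by (auto simp: sum_power2_eq_zero_iff)
    ultimately have "\<forall>i<n. rot j k 1 0 v i = w i" using oth jk
      by (auto simp: rot_def a_def b_def a'_def b'_def)
    then show ?thesis using good_rot[OF jk, of 1 0] unfolding RR_def by auto
  next
    case False
    define p where "p = (a * a' + b * b') / r"
    define q where "q = (a * b' - b * a') / r"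
    have "p\<^sup>2 + q\<^sup>2 = ((a * a' + b * b')\<^sup>2 + (a * b' - b * a')\<^sup>2) / r\<^sup>2"
      unfolding p_def q_def power_divide by (rule add_divide_distrib[symmetric])
    also have "(a * a' + b * b')\<^sup>2 + (a * b' - b * a')\<^sup>2 = (a\<^sup>2 + b\<^sup>2) * (a'\<^sup>2 + b'\<^sup>2)"
      by (simp add: power2_eq_square algebra_simps)
    finally have pq: "p\<^sup>2 + q\<^sup>2 = 1" using False sq' by (simp add: r_def power2_eq_square)
    have e1: "p * a - q * b = a'"
    proof -
      have "p * a - q * b = (a * a * a' + a * b * b' - (a * b * b' - b * b * a')) / r"
        using False by (simp add: p_def q_def field_simps)
      also have "(a * a * a' + a * b * b' - (a * b * b' - b * b * a')) = a' * r" by (simp add: r_def power2_eq_square algebra_simps)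
      finally show ?thesis using False by simp
    qed
    have e2: "q * a + p * b = b'"
    proof -
      have "q * a + p * b = (a * a * b' - a * b * a' + (a * b * a' + b * b * b')) / r"
        using False by (simp add: p_def q_def field_simps)
      also have "(a * a * b' - a * b * a' + (a * b * a' + b * b * b')) = b' * r" by (simp add: r_def power2_eq_square algebra_simps)
      finally show ?thesis using False by simp
    qed
    have "\<forall>i<n. rot j k p q v i = w i" using oth jk e1 e2
      by (auto simp: rot_def a_def b_def a'_def b'_def)
    then show ?thesis using good_rot[OF jk pq] unfolding RR_def by auto
  qed
qed

definition cn :: "(nat \<Rightarrow> real) \<Rightarrow> nat \<Rightarrow> (nat \<Rightarrow> real)" where
  "cn v m = (\<lambda>i. if i = 0 then sqrt (\<Sum>l\<le>m. (v l)\<^sup>2) else if i \<le> m then 0 else v i)"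

lemma RR_canon: fixes n m :: nat assumes "m < n" shows "RR n v (cn v m) \<and> RR n (cn v m) v"
  using assms
proof (induction m)
  case 0
  have a: "(v 0)\<^sup>2 = (cn v 0 0)\<^sup>2" by (simp add: cn_def)
  have b: "\<forall>i<n. i \<noteq> 0 \<longrightarrow> v i = cn v 0 i" by (simp add: cn_def)
  have b': "\<forall>i<n. i \<noteq> 0 \<longrightarrow> cn v 0 i = v i" using b by auto
  have z: "(0::nat) < n" using "0.prems" .
  show ?case using RR_flip[OF z a b] RR_flip[OF z a[symmetric] b'] by auto
next
  case (Suc m)
  then have IH: "RR n v (cn v m) \<and> RR n (cn v m) v" by simp
  have nn1: "0 \<le> (\<Sum>l\<le>m. (v l)\<^sup>2)" by (intro sum_nonneg) simp
  have nn: "0 \<le> (\<Sum>l\<le>m. (v l)\<^sup>2)" "0 \<le> (\<Sum>l\<le>m. (v l)\<^sup>2) + (v (Suc m))\<^sup>2"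
    using nn1 by (auto intro!: add_nonneg_nonneg)
  have sq: "(cn v m 0)\<^sup>2 + (cn v m (Suc m))\<^sup>2 = (cn v (Suc m) 0)\<^sup>2 + (cn v (Suc m) (Suc m))\<^sup>2"
  proof -
    have s1: "(sqrt (\<Sum>l\<le>m. (v l)\<^sup>2))\<^sup>2 = (\<Sum>l\<le>m. (v l)\<^sup>2)" using nn(1) by simp
    have s2: "(sqrt (\<Sum>l\<le>Suc m. (v l)\<^sup>2))\<^sup>2 = (\<Sum>l\<le>m. (v l)\<^sup>2) + (v (Suc m))\<^sup>2"
      using nn(2) by (simp del: sum.atMost_Suc add: sum.atMost_Suc[of _ m])
    show ?thesis by (simp add: cn_def s1 s2 del: sum.atMost_Suc)
  qed
  have oth: "\<forall>i<n. i \<noteq> 0 \<longrightarrow> i \<noteq> Suc m \<longrightarrow> cn v m i = cn v (Suc m) i"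
    by (auto simp: cn_def le_Suc_eq)
  have jk: "0 < n" "Suc m < n" "0 \<noteq> Suc m" using Suc.prems by auto
  have o2: "\<forall>i<n. i \<noteq> 0 \<longrightarrow> i \<noteq> Suc m \<longrightarrow> cn v (Suc m) i = cn v m i" using oth by auto
  have "RR n (cn v m) (cn v (Suc m))" by (rule RR_rot[OF jk sq oth])
  moreover have "RR n (cn v (Suc m)) (cn v m)" by (rule RR_rot[OF jk sq[symmetric] o2])
  ultimately show ?case using IH RR_trans by blast
qed

lemma RR_norm: fixes n :: nat assumes n: "n \<ge> 1" and eq: "(\<Sum>i<n. (v i)\<^sup>2) = (\<Sum>i<n. (w i)\<^sup>2)"
  shows "RR n v w"
proof -
  define m where "m = n - 1"
  have m: "m < n" "{..m} = {..<n}" using n by (auto simp: m_def)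
  have e: "\<forall>i<n. cn w m i = cn v m i" using eq m by (auto simp: cn_def)
  have c1: "RR n (cn w m) w" using RR_canon[OF m(1), of w] by (rule conjunct2)
  have c2: "RR n (cn v m) w" by (rule RR_congL[OF c1 e])
  show ?thesis by (rule RR_trans[OF conjunct1[OF RR_canon[OF m(1), of v]] c2])
qed

lemma sets_gv[simp, measurable_cong]: "sets (gauss_vec n x s) = sets (LL n)"
  by (simp add: gauss_vec_def)

lemma space_gv[simp]: "space (gauss_vec n x s) = space (LL n)"
  by (simp add: gauss_vec_def)

lemma meas_gv: "(f \<in> gauss_vec n x s \<rightarrow>\<^sub>M N) \<longleftrightarrow> (f \<in> LL n \<rightarrow>\<^sub>M N)"
  by (simp add: measurable_cong_sets[OF sets_gv refl])

lemma gauss_pdf_alt: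
  "gauss_pdf n x s y = (1 / sqrt (2 * pi * s\<^sup>2)) ^ n * exp (- (\<Sum>k<n. (y k - x k)\<^sup>2) / (2 * s\<^sup>2))"
proof -
  have "gauss_pdf n x s y = (\<Prod>k<n. (1 / sqrt (2 * pi * s\<^sup>2)) * exp (- (y k - x k)\<^sup>2 / (2 * s\<^sup>2)))"
    unfolding gauss_pdf_def normal_density_def by simp
  also have "\<dots> = (1 / sqrt (2 * pi * s\<^sup>2)) ^ n * (\<Prod>k<n. exp (- (y k - x k)\<^sup>2 / (2 * s\<^sup>2)))"
    by (subst prod.distrib) simp
  also have "(\<Prod>k<n. exp (- (y k - x k)\<^sup>2 / (2 * s\<^sup>2))) = exp (\<Sum>k<n. - (y k - x k)\<^sup>2 / (2 * s\<^sup>2))"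
    by (simp add: exp_sum)
  also have "(\<Sum>k<n. - (y k - x k)\<^sup>2 / (2 * s\<^sup>2)) = - (\<Sum>k<n. (y k - x k)\<^sup>2) / (2 * s\<^sup>2)"
    by (simp add: sum_divide_distrib sum_negf)
  finally show ?thesis .
qed

lemma pdf_good: assumes "good n F" shows "gauss_pdf n (F v) s (F y) = gauss_pdf n v s y"
  using assms unfolding gauss_pdf_alt good_def by metis

lemma gauss_vec_cong: assumes "\<forall>i<n. x i = x' i" shows "gauss_vec n x s = gauss_vec n x' s"
proof -
  have "gauss_pdf n x s = gauss_pdf n x' s" using assms by (auto simp: gauss_pdf_def fun_eq_iff intro!: prod.cong)
  then show ?thesis by (simp add: gauss_vec_def)
qed

lemma distr_good: assumes g: "good n F"
  shows "distr (gauss_vec n v s) (LL n) F = gauss_vec n (F v) s"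
proof (rule measure_eqI)
  have F: "F \<in> LL n \<rightarrow>\<^sub>M LL n" using g by (simp add: good_def minv_def)
  have Fg: "F \<in> gauss_vec n v s \<rightarrow>\<^sub>M LL n" using F meas_gv by blast
  show "sets (distr (gauss_vec n v s) (LL n) F) = sets (gauss_vec n (F v) s)" by simp
  fix A assume "A \<in> sets (distr (gauss_vec n v s) (LL n) F)"
  then have A[measurable]: "A \<in> sets (LL n)" by simp
  have pre: "F -` A \<inter> space (LL n) \<in> sets (LL n)" using F A by (rule measurable_sets)
  have "emeasure (distr (gauss_vec n v s) (LL n) F) A = emeasure (gauss_vec n v s) (F -` A \<inter> space (LL n))"
    using Fg A by (simp add: emeasure_distr)
  also have "\<dots> = (\<integral>\<^sup>+ y. ennreal (gauss_pdf n v s y) * indicator (F -` A \<inter> space (LL n)) y \<partial>LL n)"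
    unfolding gauss_vec_def using pre by (simp add: emeasure_density del: space_PiM)
  also have "\<dots> = (\<integral>\<^sup>+ y. ennreal (gauss_pdf n (F v) s (F y)) * indicator A (F y) \<partial>LL n)"
  proof (rule nn_integral_cong)
    fix y assume y: "y \<in> space (LL n)"
    show "ennreal (gauss_pdf n v s y) * indicator (F -` A \<inter> space (LL n)) y =
        ennreal (gauss_pdf n (F v) s (F y)) * indicator A (F y)"
      using y pdf_good[OF g] by (auto simp: indicator_def)
  qed
  also have "\<dots> = (\<integral>\<^sup>+ z. ennreal (gauss_pdf n (F v) s z) * indicator A z \<partial>LL n)"
  proof -
    have gm: "(\<lambda>z. ennreal (gauss_pdf n (F v) s z) * indicator A z) \<in> borel_measurable (LL n)"
      by measurable
    have H: "\<And>h. h \<in> borel_measurable (LL n) \<Longrightarrow> (\<integral>\<^sup>+ y. h (F y) \<partial>LL n) = (\<integral>\<^sup>+ y. h y \<partial>LL n)"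
      using g unfolding good_def minv_def by blast
    show ?thesis by (rule H[OF gm])
  qed
  also have "\<dots> = emeasure (gauss_vec n (F v) s) A"
    unfolding gauss_vec_def using A by (simp add: emeasure_density del: space_PiM)
  finally show "emeasure (distr (gauss_vec n v s) (LL n) F) A = emeasure (gauss_vec n (F v) s) A" .
qed

lemma test_transfer:
  fixes T :: "(nat \<Rightarrow> real) \<Rightarrow> real"
  assumes g: "good n F" and Fv: "\<forall>i<n. F v i = w i" and T: "T \<in> borel_measurable (LL n)"
  shows "(\<lambda>y. T (F y)) \<in> borel_measurable (LL n)"
    and "(\<integral>y. T (F y) \<partial>gauss_vec n v s) = (\<integral>y. T y \<partial>gauss_vec n w s)"
    and "\<And>y. y \<in> space (LL n) \<Longrightarrow> F y \<in> space (LL n)"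
proof -
  have F: "F \<in> LL n \<rightarrow>\<^sub>M LL n" using g by (simp add: good_def minv_def)
  have Fg: "F \<in> gauss_vec n v s \<rightarrow>\<^sub>M LL n" using F meas_gv by blast
  show "(\<lambda>y. T (F y)) \<in> borel_measurable (LL n)" using measurable_comp[OF F T] by (simp add: comp_def)
  show "\<And>y. y \<in> space (LL n) \<Longrightarrow> F y \<in> space (LL n)" using F by (rule measurable_space)
  have "(\<integral>y. T (F y) \<partial>gauss_vec n v s) = integral\<^sup>L (distr (gauss_vec n v s) (LL n) F) T"
    by (rule integral_distr[OF Fg T, symmetric])
  also have "\<dots> = (\<integral>y. T y \<partial>gauss_vec n w s)"
    unfolding distr_good[OF g] using gauss_vec_cong[OF Fv] by simp
  finally show "(\<integral>y. T (F y) \<partial>gauss_vec n v s) = (\<integral>y. T y \<partial>gauss_vec n w s)" .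
qed

lemma D_prop: assumes M: "M \<ge> 1"
  shows "ml_decoder n s M c y < M \<and> (\<forall>j<M. gauss_pdf n (c j) s y \<le> gauss_pdf n (c (ml_decoder n s M c y)) s y)"
proof -
  define S where "S = (\<lambda>j. gauss_pdf n (c j) s y) ` {..<M}"
  have S: "finite S" "S \<noteq> {}" using M by (auto simp: S_def lessThan_empty_iff)
  obtain i where i: "i < M" "gauss_pdf n (c i) s y = Max S" using Max_in[OF S] by (auto simp: S_def)
  have "\<forall>j<M. gauss_pdf n (c j) s y \<le> gauss_pdf n (c i) s y"
    using i(2) Max_ge[OF S(1)] by (auto simp: S_def)
  then have ex: "\<exists>i. i < M \<and> (\<forall>j<M. gauss_pdf n (c j) s y \<le> gauss_pdf n (c i) s y)" using i(1) by blast
  show ?thesis unfolding ml_decoder_def by (rule LeastI_ex[OF ex])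
qed

lemma D_meas: "ml_decoder n s M c \<in> LL n \<rightarrow>\<^sub>M count_space UNIV"
proof -
  have le: "Measurable.pred (LL n) (\<lambda>y. gauss_pdf n (c j) s y \<le> gauss_pdf n (c i) s y)" for i j
    unfolding pred_def by (rule borel_measurable_le) (rule gauss_pdf_meas)+
  have P: "Measurable.pred (LL n) (\<lambda>y. i < M \<and> (\<forall>j. j < M \<longrightarrow> gauss_pdf n (c j) s y \<le> gauss_pdf n (c i) s y))" for i
    apply (rule pred_intros_conj1')
    apply (rule pred_intros_countable(1))
    apply (rule pred_intros_imp')
    apply (rule le)
    done
  have "(\<lambda>y. LEAST i. i < M \<and> (\<forall>j<M. gauss_pdf n (c j) s y \<le> gauss_pdf n (c i) s y)) \<in> LL n \<rightarrow>\<^sub>M count_space UNIV"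
    by (rule measurable_Least[OF P])
  then show ?thesis unfolding ml_decoder_def[abs_def] .
qed

lemma E_sets: "{y \<in> space (LL n). ml_decoder n s M c y = i} \<in> sets (LL n)"
proof -
  have "{y \<in> space (LL n). ml_decoder n s M c y = i} = ml_decoder n s M c -` {i} \<inter> space (LL n)" by auto
  also have "\<dots> \<in> sets (LL n)" by (rule measurable_sets[OF D_meas]) simp
  finally show ?thesis .
qed

lemma int_le1:
  fixes T :: "'a \<Rightarrow> real"
  assumes A: "prob_space A" and T: "T \<in> borel_measurable A" and b: "\<forall>y\<in>space A. 0 \<le> T y \<and> T y \<le> 1"
  shows "(\<integral>y. T y \<partial>A) \<le> 1"
proof -
  interpret prob_space A by (rule A)
  have "integrable A T"
    by (rule integrable_const_bound[where B=1]) (use b T in \<open>auto intro!: AE_I2\<close>)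
  then have "(\<integral>y. T y \<partial>A) \<le> (\<integral>y. 1 \<partial>A)" using b by (intro integral_mono) auto
  then show ?thesis using prob_space by simp
qed

lemma alpha_le:
  fixes T :: "'a \<Rightarrow> real"
  assumes A: "prob_space A" and T: "T \<in> borel_measurable A" and b: "\<forall>y\<in>space A. 0 \<le> T y \<and> T y \<le> 1"
    and B: "(\<integral>y. T y \<partial>B) \<le> \<beta>"
  shows "alpha_beta \<beta> A B \<le> 1 - (\<integral>y. T y \<partial>A)"
  unfolding alpha_beta_def
proof (rule cInf_lower)
  show "1 - (\<integral>y. T y \<partial>A) \<in> {1 - (\<integral>y. T y \<partial>A) | T.
       T \<in> borel_measurable A \<and> (\<forall>y \<in> space A. 0 \<le> T y \<and> T y \<le> 1) \<and> (\<integral>y. T y \<partial>B) \<le> \<beta>}"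
    using T b B by blast
  show "bdd_below {1 - (\<integral>y. T y \<partial>A) | T.
       T \<in> borel_measurable A \<and> (\<forall>y \<in> space A. 0 \<le> T y \<and> T y \<le> 1) \<and> (\<integral>y. T y \<partial>B) \<le> \<beta>}"
  proof (rule bdd_belowI[where m=0])
    fix x assume "x \<in> {1 - (\<integral>y. T y \<partial>A) | T.
       T \<in> borel_measurable A \<and> (\<forall>y \<in> space A. 0 \<le> T y \<and> T y \<le> 1) \<and> (\<integral>y. T y \<partial>B) \<le> \<beta>}"
    then obtain T' where x: "x = 1 - (\<integral>y. T' y \<partial>A)" and T': "T' \<in> borel_measurable A"
      and b': "\<forall>y \<in> space A. 0 \<le> T' y \<and> T' y \<le> 1" by blast
    show "0 \<le> x" using int_le1[OF A T' b'] x by simp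
  qed
qed


lemma code_bound:
  fixes \<theta> \<sigma> \<Upsilon> a1 a2 C :: real and n M :: nat and c :: "nat \<Rightarrow> nat \<Rightarrow> real"
  assumes \<sigma>: "\<sigma> > 0" and \<theta>: "\<theta> > 0" and n: "n \<ge> 1" and M: "M \<ge> 1" and a2: "a2 \<le> 0"
    and fb: "\<And>\<beta> \<gamma>. 0 \<le> \<beta> \<Longrightarrow> \<beta> \<le> 1 \<Longrightarrow> 0 \<le> \<gamma> \<Longrightarrow>
        a1 * \<beta> + a2 * \<gamma> - C \<le> alpha_beta \<beta> (gauss_iid n (sqrt \<gamma>) \<sigma>) (gauss_iid n 0 \<theta>)"
    and pw: "(1 / real M) * (\<Sum>i<M. \<Sum>k<n. (c i k)\<^sup>2) \<le> real n * \<Upsilon>"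
  shows "a1 * (1 / real M) + a2 * \<Upsilon> - C \<le> awgn_Pe n \<sigma> M c"
proof -
  define D where "D = ml_decoder n \<sigma> M c"
  define E where "E i = {y \<in> space (LL n). D y = i}" for i
  define Q where "Q = gauss_vec n (\<lambda>_. 0) \<theta>"
  define P where "P i = gauss_vec n (c i) \<sigma>" for i
  define \<beta> where "\<beta> i = measure Q (E i)" for i
  define \<epsilon> where "\<epsilon> i = measure (P i) {y \<in> space (P i). D y \<noteq> i}" for i
  define \<gamma> where "\<gamma> i = (\<Sum>k<n. (c i k)\<^sup>2) / real n" for i
  have Qp: "prob_space Q" unfolding Q_def by (rule prob_space_gauss_vec[OF \<theta>])
  have Pp: "prob_space (P i)" for i unfolding P_def by (rule prob_space_gauss_vec[OF \<sigma>])
  have Es: "E i \<in> sets (LL n)" for i unfolding E_def D_def by (rule E_sets)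
  have Esub: "E i \<subseteq> space (LL n)" for i by (auto simp: E_def)
  have Tm: "(indicator (E i) :: _ \<Rightarrow> real) \<in> borel_measurable (LL n)" for i
    using Es by (rule borel_measurable_indicator)
  have gnn: "0 \<le> \<gamma> i" for i unfolding \<gamma>_def by (intro divide_nonneg_nonneg sum_nonneg) auto
  have bnd: "0 \<le> \<beta> i \<and> \<beta> i \<le> 1" for i
    unfolding \<beta>_def using prob_space.prob_le_1[OF Qp] by (simp add: measure_nonneg)
  have eb: "alpha_beta (\<beta> i) (gauss_iid n (sqrt (\<gamma> i)) \<sigma>) (gauss_iid n 0 \<theta>) \<le> \<epsilon> i" for i
  proof -
    have eps: "\<epsilon> i = 1 - (\<integral>y. (indicator (E i) y :: real) \<partial>P i)"
    proof -
      have "{y \<in> space (P i). D y \<noteq> i} = space (P i) - E i" by (auto simp: E_def P_def)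
      moreover have "E i \<in> sets (P i)" using Es by (simp add: P_def)
      ultimately have "\<epsilon> i = 1 - measure (P i) (E i)"
        unfolding \<epsilon>_def using prob_space.prob_compl[OF Pp] by simp
      moreover have "(\<integral>y. (indicator (E i) y :: real) \<partial>P i) = measure (P i) (E i)"
        using Esub by (simp add: P_def Int_absorb2)
      ultimately show ?thesis by simp
    qed
    have sq: "(\<Sum>k<n. (sqrt (\<gamma> i))\<^sup>2) = (\<Sum>k<n. (c i k)\<^sup>2)"
      using gnn[of i] n by (simp add: \<gamma>_def)
    obtain F where F: "good n F" "\<forall>k<n. F (\<lambda>_. sqrt (\<gamma> i)) k = c i k"
      using RR_norm[OF n sq] unfolding RR_def by blast
    have F0: "\<forall>k<n. F (\<lambda>_. 0) k = 0" using F(1) by (simp add: good_def)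
    note tt = test_transfer[OF F(1) F(2) Tm[of i]]
    note tt0 = test_transfer(2)[OF F(1) F0 Tm[of i], of \<theta>]
    have "alpha_beta (\<beta> i) (gauss_iid n (sqrt (\<gamma> i)) \<sigma>) (gauss_iid n 0 \<theta>)
        \<le> 1 - (\<integral>y. (indicator (E i) (F y) :: real) \<partial>gauss_iid n (sqrt (\<gamma> i)) \<sigma>)"
    proof (rule alpha_le)
      show "prob_space (gauss_iid n (sqrt (\<gamma> i)) \<sigma>)" unfolding gauss_iid_def by (rule prob_space_gauss_vec[OF \<sigma>])
      show "(\<lambda>y. indicator (E i) (F y) :: real) \<in> borel_measurable (gauss_iid n (sqrt (\<gamma> i)) \<sigma>)"
        unfolding gauss_iid_def meas_gv by (rule tt(1))
      show "\<forall>y\<in>space (gauss_iid n (sqrt (\<gamma> i)) \<sigma>). 0 \<le> (indicator (E i) (F y) :: real) \<and> indicator (E i) (F y) \<le> (1::real)"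
        by (auto simp: indicator_def)
      have "(\<integral>y. (indicator (E i) (F y) :: real) \<partial>gauss_iid n 0 \<theta>) = (\<integral>y. (indicator (E i) y :: real) \<partial>Q)"
        unfolding gauss_iid_def Q_def by (rule tt0)
      also have "\<dots> = \<beta> i" using Esub by (simp add: \<beta>_def Q_def Int_absorb2)
      finally show "(\<integral>y. (indicator (E i) (F y) :: real) \<partial>gauss_iid n 0 \<theta>) \<le> \<beta> i" by simp
    qed
    also have "(\<integral>y. (indicator (E i) (F y) :: real) \<partial>gauss_iid n (sqrt (\<gamma> i)) \<sigma>) = (\<integral>y. (indicator (E i) y :: real) \<partial>P i)"
      using tt(2)[of \<sigma>] by (simp add: gauss_iid_def P_def)
    finally show ?thesis using eps by simp
  qed
  have sb: "(\<Sum>i<M. \<beta> i) = 1"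
  proof -
    have dj: "disjoint_family_on E {..<M}" by (auto simp: disjoint_family_on_def E_def)
    have un: "(\<Union>i\<in>{..<M}. E i) = space Q"
      using D_prop[OF M] by (auto simp: E_def Q_def D_def)
    have "measure Q (\<Union>i\<in>{..<M}. E i) = (\<Sum>i<M. measure Q (E i))"
      by (rule measure_finite_Union) (use Es dj finite_measure.emeasure_finite[OF prob_space.finite_measure[OF Qp]] in \<open>auto simp: Q_def\<close>)
    then show ?thesis using un prob_space.prob_space[OF Qp] by (simp add: \<beta>_def)
  qed
  have ge: "a1 * \<beta> i + a2 * \<gamma> i - C \<le> \<epsilon> i" for i
    using fb[of "\<beta> i" "\<gamma> i"] bnd[of i] gnn[of i] eb[of i] by linarith
  have "(\<Sum>i<M. a1 * \<beta> i + a2 * \<gamma> i - C) \<le> (\<Sum>i<M. \<epsilon> i)" by (rule sum_mono) (rule ge)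
  moreover have "(\<Sum>i<M. a1 * \<beta> i + a2 * \<gamma> i - C) = a1 + a2 * (\<Sum>i<M. \<gamma> i) - real M * C"
    using sb by (simp add: sum.distrib sum_subtractf sum_distrib_left[symmetric])
  ultimately have s1: "a1 + a2 * (\<Sum>i<M. \<gamma> i) - real M * C \<le> (\<Sum>i<M. \<epsilon> i)" by simp
  have Mpos: "real M > 0" using M by simp
  have "(\<Sum>i<M. \<gamma> i) = (\<Sum>i<M. \<Sum>k<n. (c i k)\<^sup>2) / real n" by (simp add: \<gamma>_def sum_divide_distrib)
  also have "\<dots> \<le> real M * \<Upsilon>"
    using pw n Mpos by (simp add: field_simps)
  finally have gs: "(\<Sum>i<M. \<gamma> i) \<le> real M * \<Upsilon>" .
  have "a2 * (real M * \<Upsilon>) \<le> a2 * (\<Sum>i<M. \<gamma> i)" using gs a2 by (rule mult_left_mono_neg)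
  with s1 have s2: "a1 + a2 * (real M * \<Upsilon>) - real M * C \<le> (\<Sum>i<M. \<epsilon> i)" by linarith
  have Pe: "awgn_Pe n \<sigma> M c = (1 / real M) * (\<Sum>i<M. \<epsilon> i)"
    unfolding awgn_Pe_def \<epsilon>_def P_def D_def by simp
  have "a1 * (1 / real M) + a2 * \<Upsilon> - C = (1 / real M) * (a1 + a2 * (real M * \<Upsilon>) - real M * C)"
    using Mpos by (simp add: field_simps)
  also have "\<dots> \<le> (1 / real M) * (\<Sum>i<M. \<epsilon> i)" using s2 Mpos by (intro mult_left_mono) auto
  finally show ?thesis using Pe by simp
qed


lemma f_le1:
  assumes \<sigma>: "\<sigma> > 0" and \<beta>: "0 \<le> \<beta>"
  shows "alpha_beta \<beta> (gauss_iid n m \<sigma>) (gauss_iid n 0 \<theta>) \<le> 1"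
proof -
  have "alpha_beta \<beta> (gauss_iid n m \<sigma>) (gauss_iid n 0 \<theta>) \<le> 1 - (\<integral>y. (\<lambda>_. 0::real) y \<partial>gauss_iid n m \<sigma>)"
    by (rule alpha_le) (use \<beta> prob_space_gauss_vec[OF \<sigma>] in \<open>auto simp: gauss_iid_def\<close>)
  then show ?thesis by simp
qed

lemma env_bound:
  fixes \<theta> \<sigma> \<Upsilon> :: real and n M :: nat and c :: "nat \<Rightarrow> nat \<Rightarrow> real"
  assumes \<sigma>: "\<sigma> > 0" and \<theta>: "\<theta> > 0" and n: "n \<ge> 1" and M: "M \<ge> 1"
    and pw: "(1 / real M) * (\<Sum>i<M. \<Sum>k<n. (c i k)\<^sup>2) \<le> real n * \<Upsilon>"
  shows "lower_convex_env (\<lambda>(\<beta>, \<gamma>). alpha_beta \<beta> (gauss_iid n (sqrt \<gamma>) \<sigma>) (gauss_iid n 0 \<theta>))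
      ({0..1} \<times> {0..}) (1 / real M, \<Upsilon>) \<le> ereal (awgn_Pe n \<sigma> M c)"
    (is "lower_convex_env ?f ?D ?x \<le> _")
  unfolding lower_convex_env_def
proof (rule SUP_least)
  fix a :: "real \<times> real"
  obtain a1 a2 where a: "a = (a1, a2)" by (cases a)
  show "ereal (fst a * fst ?x + snd a * snd ?x) - conj2 ?f ?D a \<le> ereal (awgn_Pe n \<sigma> M c)"
  proof (cases "a2 > 0")
    case True
    have "conj2 ?f ?D a = \<infinity>"
    proof (rule ereal_top)
      fix B :: real
      define t where "t = max 0 ((B + 1) / a2)"
      have t0: "t \<ge> 0" by (simp add: t_def)
      have "(B + 1) / a2 \<le> t" by (simp add: t_def)
      then have t1: "B + 1 \<le> a2 * t" using True by (simp add: pos_divide_le_eq mult.commute)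
      have mem: "(0, t) \<in> ?D" using t0 by simp
      have f1: "?f (0, t) \<le> 1" using f_le1[OF \<sigma>, of 0] by simp
      have "ereal B \<le> ereal (fst a * fst (0, t) + snd a * snd (0, t)) - ereal (?f (0, t))"
        using t1 f1 a by simp
      then show "ereal B \<le> conj2 ?f ?D a" unfolding conj2_def by (rule SUP_upper2[OF mem])
    qed
    then show ?thesis by simp
  next
    case False
    have mem0: "(0, 0) \<in> ?D" by simp
    have lb: "ereal (fst a * fst (0::real, 0::real) + snd a * snd (0::real, 0::real)) - ereal (?f (0, 0)) \<le> conj2 ?f ?D a"
      unfolding conj2_def by (rule SUP_upper[OF mem0])
    show ?thesis
    proof (cases "conj2 ?f ?D a")
      case (real C)
      have fb: "a1 * \<beta> + a2 * \<gamma> - C \<le> alpha_beta \<beta> (gauss_iid n (sqrt \<gamma>) \<sigma>) (gauss_iid n 0 \<theta>)"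
        if "0 \<le> \<beta>" "\<beta> \<le> 1" "0 \<le> \<gamma>" for \<beta> \<gamma>
      proof -
        have mem: "(\<beta>, \<gamma>) \<in> ?D" using that by simp
        have "ereal (fst a * fst (\<beta>, \<gamma>) + snd a * snd (\<beta>, \<gamma>)) - ereal (?f (\<beta>, \<gamma>)) \<le> conj2 ?f ?D a"
          unfolding conj2_def by (rule SUP_upper[OF mem])
        then show ?thesis using real a by simp
      qed
      have "a1 * (1 / real M) + a2 * \<Upsilon> - C \<le> awgn_Pe n \<sigma> M c"
        by (rule code_bound[OF \<sigma> \<theta> n M _ fb pw]) (use False in auto)
      then show ?thesis using real a by simp
    next
      case PInf
      then show ?thesis by simp
    next
      case MInf
      then show ?thesis using lb by simp
    qed
  qed
qed

theorem theorem4: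
  fixes \<theta> \<sigma> \<Upsilon> :: real and n M :: nat
  assumes "\<theta> \<ge> \<sigma>" and "\<sigma> > 0" and "n \<ge> 1" and "M \<ge> 1" and "\<Upsilon> > 0"
  shows "ereal (eps_a_star \<sigma> n M \<Upsilon>) \<ge>
    lower_convex_env
      (\<lambda>(\<beta>, \<gamma>). alpha_beta \<beta> (gauss_iid n (sqrt \<gamma>) \<sigma>) (gauss_iid n 0 \<theta>))
      ({0..1} \<times> {0..}) (1 / real M, \<Upsilon>)"
    (is "_ \<ge> ?L")
proof -
  have \<theta>: "\<theta> > 0" using assms by linarith
  define S where "S = {awgn_Pe n \<sigma> M c | c. (1 / real M) * (\<Sum>i<M. \<Sum>k<n. (c i k)\<^sup>2) \<le> real n * \<Upsilon>}"
  have eq: "eps_a_star \<sigma> n M \<Upsilon> = Inf S" unfolding eps_a_star_def S_def ..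
  have key: "?L \<le> ereal x" if "x \<in> S" for x
    using that env_bound[OF assms(2) \<theta> assms(3) assms(4)] unfolding S_def by blast
  have c0: "awgn_Pe n \<sigma> M (\<lambda>_ _. 0) \<in> S" unfolding S_def using assms(5) by auto
  show ?thesis
  proof (cases ?L)
    case (real r)
    have "r \<le> Inf S"
    proof (rule cInf_greatest)
      show "S \<noteq> {}" using c0 by blast
      fix x assume "x \<in> S" then show "r \<le> x" using key real by fastforce
    qed
    then show ?thesis using real eq by simp
  next
    case PInf
    then show ?thesis using key[OF c0] by simp
  next
    case MInf
    then show ?thesis by simp
  qed
qed

end
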